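(* Let $e\ge 3$, let $y\in[1,e-1]$ be rational with denominator $z>1$ (in lowest terms). Suppose $\lambda$ and $\mu$ are partitions lying in the same $(ez,yz)$-ladder class. Then $\lambda$ and $\mu$ have the same number of $y$-bad hooks.
   Context: Partitions are identified with Young diagrams $\{(r,c)\in\mathbb N^2: c\le\lambda_r\}$ (rows counted downwards, columns to the right). The hook of $\lambda$ at a node $(r,c)$ consists of all nodes of $\lambda$ of the form $(r,c')$ with $c'\ge c$ or $(r',c)$ with $r'\ge r$; its length is $\lambda_r-c+\lambda'_c-r+1$ and its arm length is $\lambda_r-c$. For integers $1\le y'<e'$, the $(e',y')$-ladder through $(r,c)\in\mathbb Z^2$ is $\{(r+k(y'-e'),\,c+ky'):k\in\mathbb Z\}$; these ladders partition $\mathbb Z^2$. Two partitions $\lambda,\mu$ are $(e',y')$-equivalent if $|\mathcal L\cap\lambda|=|\mathcal L\cap\mu|$ for every $(e',y')$-ladder $\mathcal L$; the equivalence classes are called $(e',y')$-ladder classes. A hook is $y$-bad if it has length $te$ and arm length $\lfloor yt\rfloor$ for some positive integer $t$ not divisible by $z$. *)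

theory Defs
  imports Complex_Main
begin

definition is_partition :: "nat list \<Rightarrow> bool" where
  "is_partition la \<longleftrightarrow> sorted_wrt (\<ge>) la \<and> 0 \<notin> set la"

definition part_row :: "nat list \<Rightarrow> nat \<Rightarrow> nat" where
  "part_row la r = (if 1 \<le> r \<and> r \<le> length la then la ! (r - 1) else 0)"

definition part_col :: "nat list \<Rightarrow> nat \<Rightarrow> nat" where
  "part_col la c = card {r. 1 \<le> r \<and> c \<le> part_row la r}"

definition diagram :: "nat list \<Rightarrow> (int \<times> int) set" where
  "diagram la = {(int r, int c) | r c. 1 \<le> r \<and> 1 \<le> c \<and> c \<le> part_row la r}"

definition hook_length :: "nat list \<Rightarrow> nat \<Rightarrow> nat \<Rightarrow> nat" where
  "hook_length la r c = part_row la r - c + part_col la c - r + 1"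

definition arm_length :: "nat list \<Rightarrow> nat \<Rightarrow> nat \<Rightarrow> nat" where
  "arm_length la r c = part_row la r - c"

definition ladder :: "int \<Rightarrow> int \<Rightarrow> int \<times> int \<Rightarrow> (int \<times> int) set" where
  "ladder e' y' p = {(fst p + k * (y' - e'), snd p + k * y') | k. True}"

definition ladder_equiv :: "int \<Rightarrow> int \<Rightarrow> nat list \<Rightarrow> nat list \<Rightarrow> bool" where
  "ladder_equiv e' y' la mu \<longleftrightarrow>
     (\<forall>p. card (ladder e' y' p \<inter> diagram la) = card (ladder e' y' p \<inter> diagram mu))"

definition bad_hook :: "nat \<Rightarrow> rat \<Rightarrow> nat \<Rightarrow> nat \<Rightarrow> nat \<Rightarrow> bool" where
  "bad_hook e y z hl al \<longleftrightarrow>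
     (\<exists>t::nat. 0 < t \<and> \<not> z dvd t \<and> hl = t * e \<and> int al = \<lfloor>y * of_nat t\<rfloor>)"

definition num_bad_hooks :: "nat \<Rightarrow> rat \<Rightarrow> nat \<Rightarrow> nat list \<Rightarrow> nat" where
  "num_bad_hooks e y z la = card {(r, c). 1 \<le> r \<and> 1 \<le> c \<and> c \<le> part_row la r \<and>
       bad_hook e y z (hook_length la r c) (arm_length la r c)}"

end

theory Submission
  imports Defs
begin


lemma ladder_mem: "q \<in> ladder e' y' p \<longleftrightarrow> (\<exists>k. q = (fst p + k*(y'-e'), snd p + k*y'))"
  by (auto simp: ladder_def)

lemma ladder_self: "p \<in> ladder e' y' p"
  unfolding ladder_mem by (rule exI[of _ 0]) simp

lemma ladder_eq: assumes "q \<in> ladder e' y' p" shows "ladder e' y' q = ladder e' y' p"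
proof -
  from assms obtain k where q: "q = (fst p + k*(y'-e'), snd p + k*y')" by (auto simp: ladder_mem)
  show ?thesis
  proof (intro set_eqI iffI)
    fix x assume "x \<in> ladder e' y' q"
    then obtain j where "x = (fst q + j*(y'-e'), snd q + j*y')" by (auto simp: ladder_mem)
    then have "x = (fst p + (k+j)*(y'-e'), snd p + (k+j)*y')" using q by (simp add: algebra_simps)
    then show "x \<in> ladder e' y' p" by (auto simp: ladder_mem)
  next
    fix x assume "x \<in> ladder e' y' p"
    then obtain j where "x = (fst p + j*(y'-e'), snd p + j*y')" by (auto simp: ladder_mem)
    then have "x = (fst q + (j-k)*(y'-e'), snd q + (j-k)*y')" using q by (simp add: algebra_simps)
    then show "x \<in> ladder e' y' q" by (auto simp: ladder_mem)
  qed
qed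

lemma ladder_iff: "q \<in> ladder e' y' p \<longleftrightarrow> ladder e' y' q = ladder e' y' p"
  using ladder_eq ladder_self by metis

lemma fiber_sum:
  fixes f :: "int \<times> int \<Rightarrow> 'b::comm_semiring_1"
  assumes fX: "finite X" and fY: "finite Y"
    and cnt: "\<And>p. card (ladder e' y' p \<inter> X) = card (ladder e' y' p \<inter> Y)"
    and inv: "\<And>p q. q \<in> ladder e' y' p \<Longrightarrow> f q = f p"
  shows "sum f X = sum f Y"
proof -
  let ?g = "ladder e' y'"
  have cS: "sum f (Z \<inter> ?g p) = of_nat (card (?g p \<inter> Z)) * f p" for Z p
  proof -
    have "sum f (Z \<inter> ?g p) = sum (\<lambda>_. f p) (Z \<inter> ?g p)"
      by (rule sum.cong) (auto intro: inv)
    also have "\<dots> = of_nat (card (?g p \<inter> Z)) * f p" by (simp add: Int_commute)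
    finally show ?thesis .
  qed
  have fib: "{x \<in> Z. ?g x = ?g p} = Z \<inter> ?g p" for Z p
    using ladder_iff by blast
  have img: "?g ` X = ?g ` Y"
  proof -
    have sub: "?g ` X \<subseteq> ?g ` Y"
      if fX: "finite X" and fY: "finite Y" and c: "\<And>p. card (?g p \<inter> X) = card (?g p \<inter> Y)" for X Y
    proof
      fix L assume "L \<in> ?g ` X"
      then obtain x where x: "x \<in> X" "L = ?g x" by auto
      have "x \<in> ?g x \<inter> X" using x ladder_self by blast
      then have "card (?g x \<inter> X) > 0" using fX by (auto simp: card_gt_0_iff)
      then have "card (?g x \<inter> Y) > 0" using c by simp
      then obtain w where "w \<in> ?g x \<inter> Y" by (auto simp: card_gt_0_iff)
      then show "L \<in> ?g ` Y" using x ladder_iff by blast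
    qed
    show ?thesis using sub[OF fX fY cnt] sub[OF fY fX cnt[symmetric]] by blast
  qed
  have "sum f X = (\<Sum>L\<in>?g ` X. sum f {x \<in> X. ?g x = L})"
    by (rule sum.image_gen[OF fX])
  also have "\<dots> = (\<Sum>L\<in>?g ` X. sum f {x \<in> Y. ?g x = L})"
  proof (rule sum.cong[OF refl])
    fix L assume "L \<in> ?g ` X"
    then obtain p where "L = ?g p" by auto
    then show "sum f {x \<in> X. ?g x = L} = sum f {x \<in> Y. ?g x = L}"
      using cS fib cnt by simp
  qed
  also have "\<dots> = sum f Y" unfolding img by (rule sum.image_gen[OF fY, symmetric])
  finally show ?thesis .
qed



definition lamz :: "nat list \<Rightarrow> int \<Rightarrow> int \<Rightarrow> int" where
  "lamz la M j = (if j \<le> 0 then M else int (part_row la (nat j)))"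

lemma length_le_sum: "0 \<notin> set la \<Longrightarrow> length la \<le> sum_list la"
  by (induct la) auto

lemma part_row_le_sum: "part_row la r \<le> sum_list la"
  unfolding part_row_def by (auto intro: elem_le_sum_list)

lemma part_row_beyond: "length la < r \<Longrightarrow> part_row la r = 0"
  unfolding part_row_def by auto

lemma part_row_pos: assumes "is_partition la" "1 \<le> r" "r \<le> length la" shows "part_row la r > 0"
proof -
  have "la ! (r-1) \<in> set la" using assms by auto
  moreover have "0 \<notin> set la" using assms(1) unfolding is_partition_def by simp
  ultimately have "la ! (r-1) \<noteq> 0" by metis
  then show ?thesis using assms unfolding part_row_def by simp
qed

lemma part_row_anti: assumes "is_partition la" "1 \<le> i" "i \<le> j" shows "part_row la j \<le> part_row la i"
proof (cases "j \<le> length la")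
  case True
  show ?thesis
  proof (cases "i = j")
    case False
    then have "i - 1 < j - 1" using assms by auto
    then have "la ! (j-1) \<le> la ! (i-1)"
      using sorted_wrt_nth_less[of "(\<ge>)" la "i-1" "j-1"] assms True
      unfolding is_partition_def by auto
    then show ?thesis using True assms unfolding part_row_def by auto
  qed simp
next
  case False then show ?thesis by (simp add: part_row_beyond)
qed

lemma lamz_nonneg: "0 \<le> M \<Longrightarrow> 0 \<le> lamz la M j"
  unfolding lamz_def by auto

lemma lamz_anti: assumes "is_partition la" "int (part_row la 1) \<le> M" "i \<le> j"
  shows "lamz la M j \<le> lamz la M i"
proof -
  consider "j \<le> 0" | "i \<le> 0" "0 < j" | "0 < i" by linarith
  then show ?thesis
  proof cases
    case 1 then show ?thesis using assms by (simp add: lamz_def)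
  next
    case 2
    have "part_row la (nat j) \<le> part_row la 1" using part_row_anti[OF assms(1), of 1 "nat j"] 2 by auto
    then show ?thesis using 2 assms by (simp add: lamz_def)
  next
    case 3
    have "part_row la (nat j) \<le> part_row la (nat i)" using part_row_anti[OF assms(1), of "nat i" "nat j"] 3 assms by auto
    then show ?thesis using 3 assms by (simp add: lamz_def)
  qed
qed

lemma lamz_pos_nonneg[simp]: "0 < j \<Longrightarrow> 0 \<le> lamz la M j"
  unfolding lamz_def by auto

lemma lamz_beyond: "int (length la) < j \<Longrightarrow> lamz la M j = 0"
  unfolding lamz_def by (auto simp: part_row_beyond)

lemma lamz_le_sum: "0 < j \<Longrightarrow> lamz la M j \<le> int (sum_list la)"
  unfolding lamz_def using part_row_le_sum by auto

definition dg :: "nat list \<Rightarrow> int \<Rightarrow> int \<Rightarrow> (int \<times> int) set" where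
  "dg la M N = (SIGMA r:{1..N}. {1..lamz la M r})"
definition Vs :: "nat list \<Rightarrow> int \<Rightarrow> int \<Rightarrow> (int \<times> int) set" where
  "Vs la M N = (SIGMA r:{1..N}. {lamz la M r + 1})"
definition Hs :: "nat list \<Rightarrow> int \<Rightarrow> int \<Rightarrow> (int \<times> int) set" where
  "Hs la M N = (SIGMA r:{1..N+1}. {lamz la M r + 1 .. lamz la M (r-1)})"

lemma finite_dg: "finite (dg la M N)" unfolding dg_def by auto
lemma finite_Vs: "finite (Vs la M N)" unfolding Vs_def by auto
lemma finite_Hs: "finite (Hs la M N)" unfolding Hs_def by auto

lemma diagram_eq: assumes "int (length la) \<le> N" shows "diagram la = dg la M N"
proof (intro set_eqI iffI)
  fix x assume "x \<in> diagram la"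
  then obtain r c where x: "x = (int r, int c)" "1 \<le> r" "1 \<le> c" "c \<le> part_row la r"
    unfolding diagram_def by auto
  then have "r \<le> length la" using part_row_beyond[of la r] by (cases "length la < r") auto
  then show "x \<in> dg la M N" using x assms unfolding dg_def lamz_def by auto
next
  fix x assume "x \<in> dg la M N"
  then obtain r c where x: "x = (r, c)" "1 \<le> r" "r \<le> N" "1 \<le> c" "c \<le> lamz la M r"
    unfolding dg_def by auto
  then have "x = (int (nat r), int (nat c))" "1 \<le> nat r" "1 \<le> nat c" "nat c \<le> part_row la (nat r)"
    unfolding lamz_def by auto
  then show "x \<in> diagram la" unfolding diagram_def by blast
qed

lemma card_split: "finite A \<Longrightarrow> finite B \<Longrightarrow> A \<inter> B = {} \<Longrightarrow>
   card (G \<inter> (A \<union> B)) = card (G \<inter> A) + card (G \<inter> B)"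
  by (subst card_Un_disjoint[symmetric]) (auto simp: Int_Un_distrib)

lemma card_img: "inj f \<Longrightarrow> card (G \<inter> f ` D) = card ({x. f x \<in> G} \<inter> D)"
proof -
  assume "inj f"
  have "G \<inter> f ` D = f ` ({x. f x \<in> G} \<inter> D)" by auto
  then show ?thesis using \<open>inj f\<close> by (simp add: card_image inj_on_subset)
qed

lemma shift_r: "{x. (fst x, snd x + 1) \<in> ladder e' y' p} = ladder e' y' (fst p, snd p - 1)"
proof -
  have "(\<exists>k. (fst x, snd x + 1) = (fst p + k*(y'-e'), snd p + k*y')) \<longleftrightarrow>
        (\<exists>k. x = (fst p + k*(y'-e'), snd p - 1 + k*y'))" for x :: "int \<times> int"
    by (intro ex_cong1) (auto simp: prod_eq_iff algebra_simps)
  then show ?thesis by (auto simp: ladder_mem)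
qed

lemma shift_d: "{x. (fst x + 1, snd x) \<in> ladder e' y' p} = ladder e' y' (fst p - 1, snd p)"
proof -
  have "(\<exists>k. (fst x + 1, snd x) = (fst p + k*(y'-e'), snd p + k*y')) \<longleftrightarrow>
        (\<exists>k. x = (fst p - 1 + k*(y'-e'), snd p + k*y'))" for x :: "int \<times> int"
    by (intro ex_cong1) (auto simp: prod_eq_iff algebra_simps)
  then show ?thesis by (auto simp: ladder_mem)
qed

lemma V_ident:
  fixes G :: "(int \<times> int) set"
  shows "card (G \<inter> dg la M N) + card (G \<inter> Vs la M N) =
         card (G \<inter> (SIGMA r:{1..N}. {1})) + card ({x. (fst x, snd x + 1) \<in> G} \<inter> dg la M N)"
proof -
  let ?S = "SIGMA r:{1..N}. {1..lamz la M r + 1}"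
  have e1: "?S = dg la M N \<union> Vs la M N" unfolding dg_def Vs_def by auto
  have e2: "?S = (SIGMA r:{1..N}. {1}) \<union> (\<lambda>x. (fst x, snd x + 1)) ` dg la M N"
  proof (intro set_eqI iffI)
    fix x assume x: "x \<in> ?S"
    show "x \<in> (SIGMA r:{1..N}. {1}) \<union> (\<lambda>x. (fst x, snd x + 1)) ` dg la M N"
    proof (cases "snd x = 1")
      case False
      then have "(fst x, snd x - 1) \<in> dg la M N" using x unfolding dg_def by auto
      then show ?thesis by (intro UnI2 image_eqI[where x="(fst x, snd x - 1)"]) auto
    qed (use x in auto)
  next
    fix x assume "x \<in> (SIGMA r:{1..N}. {1}) \<union> (\<lambda>x. (fst x, snd x + 1)) ` dg la M N"
    then show "x \<in> ?S" unfolding dg_def by (auto simp: lamz_def)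
  qed
  have inj: "inj (\<lambda>x::int\<times>int. (fst x, snd x + 1))" by (auto simp: inj_def prod_eq_iff)
  have "card (G \<inter> ?S) = card (G \<inter> dg la M N) + card (G \<inter> Vs la M N)"
    unfolding e1 by (rule card_split) (auto simp: finite_dg finite_Vs dg_def Vs_def)
  moreover have "card (G \<inter> ?S) = card (G \<inter> (SIGMA r:{1..N}. {1})) + card ({x. (fst x, snd x + 1) \<in> G} \<inter> dg la M N)"
    unfolding e2 by (subst card_split) (auto simp: finite_dg dg_def card_img[OF inj])
  ultimately show ?thesis by simp
qed



lemma H_ident:
  fixes G :: "(int \<times> int) set"
  assumes part: "is_partition la" and M: "int (part_row la 1) \<le> M" and N: "int (length la) \<le> N"
  shows "card (G \<inter> dg la M N) + card (G \<inter> Hs la M N) =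
         card (G \<inter> (SIGMA r:{1..1}. {1..M})) + card ({x. (fst x + 1, snd x) \<in> G} \<inter> dg la M N)"
proof -
  let ?S = "SIGMA r:{1..N+1}. {1..lamz la M (r - 1)}"
  have z: "lamz la M (N+1) = 0" using lamz_beyond N by auto
  have an: "lamz la M r \<le> lamz la M (r - 1)" for r using lamz_anti[OF part M] by auto
  have M0: "0 \<le> M" using M by linarith
  have nn: "0 \<le> lamz la M r" for r using lamz_nonneg[OF M0] .
  have e1: "?S = dg la M N \<union> Hs la M N"
  proof (intro set_eqI iffI)
    fix x assume x: "x \<in> ?S"
    obtain r c where rc: "x = (r,c)" by force
    have r: "1 \<le> r" "r \<le> N+1" and c: "1 \<le> c" "c \<le> lamz la M (r-1)" using x rc by auto
    show "x \<in> dg la M N \<union> Hs la M N"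
    proof (cases "c \<le> lamz la M r")
      case True
      then have "r \<noteq> N+1" using z c by auto
      then show ?thesis using r c True rc unfolding dg_def by auto
    next
      case False then show ?thesis using r c rc unfolding Hs_def by auto
    qed
  next
    fix x assume x: "x \<in> dg la M N \<union> Hs la M N"
    obtain r c where rc: "x = (r,c)" by force
    have "1 \<le> r \<and> r \<le> N+1 \<and> 1 \<le> c \<and> c \<le> lamz la M (r-1)"
    proof (cases "x \<in> dg la M N")
      case True
      then have "1 \<le> r" "r \<le> N" "1 \<le> c" "c \<le> lamz la M r" using rc unfolding dg_def by auto
      then show ?thesis using an[of r] by linarith
    next
      case False
      then have "x \<in> Hs la M N" using x by blast
      then have "1 \<le> r" "r \<le> N+1" "lamz la M r + 1 \<le> c" "c \<le> lamz la M (r-1)" using rc unfolding Hs_def by auto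
      then show ?thesis using nn[of r] by linarith
    qed
    then show "x \<in> ?S" using rc by auto
  qed
  have e2: "?S = (SIGMA r:{1..1}. {1..M}) \<union> (\<lambda>x. (fst x + 1, snd x)) ` dg la M N"
  proof (intro set_eqI iffI)
    fix x assume x: "x \<in> ?S"
    obtain r c where rc: "x = (r,c)" by force
    have r: "1 \<le> r" "r \<le> N+1" and c: "1 \<le> c" "c \<le> lamz la M (r-1)" using x rc by auto
    show "x \<in> (SIGMA r:{1..1}. {1..M}) \<union> (\<lambda>x. (fst x + 1, snd x)) ` dg la M N"
    proof (cases "r = 1")
      case True
      then have "c \<le> M" using c by (simp add: lamz_def)
      then show ?thesis using True c rc by auto
    next
      case False
      then have "(r - 1, c) \<in> dg la M N" using r c unfolding dg_def by auto
      then show ?thesis using rc by (intro UnI2 image_eqI[where x="(r - 1, c)"]) auto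
    qed
  next
    fix x assume x: "x \<in> (SIGMA r:{1..1}. {1..M}) \<union> (\<lambda>x. (fst x + 1, snd x)) ` dg la M N"
    show "x \<in> ?S"
    proof (cases "x \<in> (SIGMA r:{1..1}. {1..M})")
      case True then show ?thesis using N by (auto simp: lamz_def)
    next
      case False
      then obtain r c where "x = (r+1, c)" "1 \<le> r" "r \<le> N" "1 \<le> c" "c \<le> lamz la M r"
        using x unfolding dg_def by auto
      then show ?thesis by auto
    qed
  qed
  have inj: "inj (\<lambda>x::int\<times>int. (fst x + 1, snd x))" by (auto simp: inj_def prod_eq_iff)
  have "card (G \<inter> ?S) = card (G \<inter> dg la M N) + card (G \<inter> Hs la M N)"
    unfolding e1 by (rule card_split) (simp_all add: finite_dg finite_Hs, force simp: dg_def Hs_def)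
  moreover have "card (G \<inter> ?S) = card (G \<inter> (SIGMA r:{1..1}. {1..M})) + card ({x. (fst x + 1, snd x) \<in> G} \<inter> dg la M N)"
    unfolding e2 by (subst card_split) (auto simp: finite_dg dg_def card_img[OF inj])
  ultimately show ?thesis by simp
qed

lemma ladder_counts:
  assumes eq: "ladder_equiv E A la mu"
    and pl: "is_partition la" and pm: "is_partition mu"
    and Ml: "int (part_row la 1) \<le> M" and Mm: "int (part_row mu 1) \<le> M"
    and Nl: "int (length la) \<le> N" and Nm: "int (length mu) \<le> N"
  shows "card (ladder E A p \<inter> Vs la M N) = card (ladder E A p \<inter> Vs mu M N)"
    and "card (ladder E A p \<inter> Hs la M N) = card (ladder E A p \<inter> Hs mu M N)"
proof -
  have d: "card (ladder E A q \<inter> dg la M N) = card (ladder E A q \<inter> dg mu M N)" for q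
    using eq unfolding ladder_equiv_def diagram_eq[OF Nl, of M, symmetric] diagram_eq[OF Nm, of M, symmetric]
    by blast
  show "card (ladder E A p \<inter> Vs la M N) = card (ladder E A p \<inter> Vs mu M N)"
    using V_ident[of "ladder E A p" la M N] V_ident[of "ladder E A p" mu M N]
    unfolding shift_r using d by simp
  show "card (ladder E A p \<inter> Hs la M N) = card (ladder E A p \<inter> Hs mu M N)"
    using H_ident[OF pl Ml Nl, of "ladder E A p"] H_ident[OF pm Mm Nm, of "ladder E A p"]
    unfolding shift_d using d by simp
qed



locale sett =
  fixes e :: nat and y :: rat and a z :: int
  assumes e3: "e \<ge> 3" and y1: "1 \<le> y" and ye: "y \<le> of_nat e - 1"
    and q: "quotient_of y = (a, z)" and z1: "z > 1"
begin

definition fl :: "int \<Rightarrow> int" where "fl t = \<lfloor>y * of_int t\<rfloor>"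

lemma yz: "y * of_int z = of_int a"
  using quotient_of_div[OF q] z1 by simp

lemma cop: "coprime a z" using quotient_of_coprime[OF q] .

lemma fl_shift: "fl (t + k*z) = fl t + k*a"
proof -
  have "y * of_int (t + k*z) = y * of_int t + of_int (k*a)"
    using yz by (simp add: algebra_simps)
  then have "fl (t + k*z) = \<lfloor>y * of_int t + of_int (k*a)\<rfloor>" unfolding fl_def by simp
  also have "\<dots> = fl t + k*a" unfolding fl_def by (rule floor_add_int[symmetric])
  finally show ?thesis .
qed

lemma not_int: assumes "\<not> z dvd t" shows "y * of_int t \<noteq> of_int (fl t)"
proof
  assume h: "y * of_int t = of_int (fl t)"
  then have "y * of_int z * of_int t = of_int (fl t) * of_int z" by (simp add: algebra_simps)
  then have "of_int (a * t) = (of_int (fl t * z) :: rat)" using yz by simp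
  then have "a * t = fl t * z" by linarith
  then have "z dvd a * t" by simp
  then have "z dvd t" using cop by (simp add: coprime_commute coprime_dvd_mult_right_iff)
  then show False using assms by simp
qed

lemma fl_neg: assumes "\<not> z dvd t" shows "fl (-t) = - fl t - 1"
proof -
  have lo: "of_int (fl t) \<le> y * of_int t" unfolding fl_def by simp
  have hi: "y * of_int t < of_int (fl t) + 1" unfolding fl_def by linarith
  have lo': "of_int (fl t) < y * of_int t" using lo not_int[OF assms] by simp
  show ?thesis unfolding fl_def
    by (rule floor_unique) (use lo' hi in \<open>auto simp: fl_def\<close>)
qed

lemma fl_ge: assumes "0 \<le> t" shows "t \<le> fl t"
proof -
  have "1 * of_int t \<le> y * of_int t" using y1 assms
    by (intro mult_right_mono) auto
  then show ?thesis unfolding fl_def by (simp add: le_floor_iff)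
qed

lemma fl_le: assumes "0 \<le> t" shows "fl t \<le> (int e - 1) * t"
proof -
  have "y * of_int t \<le> (of_nat e - 1) * of_int t" using ye assms
    by (simp add: mult_right_mono)
  also have "\<dots> = of_int ((int e - 1) * t)" by simp
  finally show ?thesis unfolding fl_def by (simp add: floor_le_iff)
qed

lemma fl_mono: assumes "t < t'" shows "fl t < fl t'"
proof -
  have "1 \<le> t' - t" using assms by simp
  then have "1 \<le> (of_int (t' - t) :: rat)" by linarith
  then have "1 * 1 \<le> y * of_int (t' - t)" using y1
    by (intro mult_mono) auto
  then have "y * of_int t + 1 \<le> y * of_int t'" by (simp add: algebra_simps)
  then have "\<lfloor>y * of_int t + 1\<rfloor> \<le> \<lfloor>y * of_int t'\<rfloor>" by (rule floor_mono)
  then show ?thesis unfolding fl_def by simp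
qed

lemma fl_inj: "fl t = fl t' \<Longrightarrow> t = t'"
  using fl_mono by (metis less_irrefl linorder_neqE)

definition Pv :: "int \<Rightarrow> int \<times> int" where
  "Pv t = (- (t * int e - fl t), fl t + 1)"

definition Rel :: "int \<times> int \<Rightarrow> int \<times> int \<Rightarrow> bool" where
  "Rel v h \<longleftrightarrow> (\<exists>t. \<not> z dvd t \<and> (fst v - fst h, snd v - snd h) = Pv t)"

lemma Pv_shift: "Pv (t + k*z) = (fst (Pv t) + k*(a - int e * z), snd (Pv t) + k*a)"
  unfolding Pv_def fl_shift by (simp add: algebra_simps)

lemma Rel_v1: assumes "v' \<in> ladder (int e * z) a v" "Rel v h" shows "Rel v' h"
proof -
  obtain k where v': "v' = (fst v + k*(a - int e * z), snd v + k*a)" using assms(1) by (auto simp: ladder_mem)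
  obtain t where t: "\<not> z dvd t" "(fst v - fst h, snd v - snd h) = Pv t" using assms(2) unfolding Rel_def by auto
  have "\<not> z dvd (t + k*z)" using t(1) by (metis dvd_add_left_iff dvd_triv_right)
  moreover have "(fst v' - fst h, snd v' - snd h) = Pv (t + k*z)"
    unfolding Pv_shift using t(2) v' by (auto simp: prod_eq_iff algebra_simps)
  ultimately show ?thesis unfolding Rel_def by blast
qed

lemma Rel_h1: assumes "h' \<in> ladder (int e * z) a h" "Rel v h" shows "Rel v h'"
proof -
  obtain k where h': "h' = (fst h + k*(a - int e * z), snd h + k*a)" using assms(1) by (auto simp: ladder_mem)
  obtain t where t: "\<not> z dvd t" "(fst v - fst h, snd v - snd h) = Pv t" using assms(2) unfolding Rel_def by auto
  have "\<not> z dvd (t + (-k)*z)" using t(1) by (metis dvd_add_left_iff dvd_triv_right)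
  moreover have "(fst v - fst h', snd v - snd h') = Pv (t + (-k)*z)"
    unfolding Pv_shift using t(2) h' by (auto simp: prod_eq_iff algebra_simps)
  ultimately show ?thesis unfolding Rel_def by blast
qed

lemma Rel_v: "v' \<in> ladder (int e * z) a v \<Longrightarrow> Rel v' h = Rel v h"
  using Rel_v1 ladder_iff ladder_self by metis

lemma Rel_h: "h' \<in> ladder (int e * z) a h \<Longrightarrow> Rel v h' = Rel v h"
  using Rel_h1 ladder_iff ladder_self by metis

definition W :: "nat list \<Rightarrow> int \<Rightarrow> int \<Rightarrow> nat" where
  "W la M N = (\<Sum>v\<in>Vs la M N. \<Sum>h\<in>Hs la M N. of_bool (Rel v h))"

lemma W_inv:
  assumes eq: "ladder_equiv (int e * z) a la mu"
    and pl: "is_partition la" and pm: "is_partition mu"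
    and Ml: "int (part_row la 1) \<le> M" and Mm: "int (part_row mu 1) \<le> M"
    and Nl: "int (length la) \<le> N" and Nm: "int (length mu) \<le> N"
  shows "W la M N = W mu M N"
proof -
  note cV = ladder_counts(1)[OF eq pl pm Ml Mm Nl Nm]
  note cH = ladder_counts(2)[OF eq pl pm Ml Mm Nl Nm]
  have "W la M N = (\<Sum>v\<in>Vs mu M N. \<Sum>h\<in>Hs la M N. of_bool (Rel v h))"
    unfolding W_def
  proof (rule fiber_sum[where e'="int e * z" and y'=a])
    show "(\<Sum>h\<in>Hs la M N. of_bool (Rel q h)) = (\<Sum>h\<in>Hs la M N. of_bool (Rel p h))"
      if "q \<in> ladder (int e * z) a p" for p q
      by (rule sum.cong[OF refl]) (simp only: Rel_v[OF that])
  qed (simp_all add: cV finite_Vs)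
  also have "\<dots> = (\<Sum>h\<in>Hs la M N. \<Sum>v\<in>Vs mu M N. of_bool (Rel v h))" by (rule sum.swap)
  also have "\<dots> = (\<Sum>h\<in>Hs mu M N. \<Sum>v\<in>Vs mu M N. of_bool (Rel v h))"
  proof (rule fiber_sum[where e'="int e * z" and y'=a])
    show "(\<Sum>v\<in>Vs mu M N. of_bool (Rel v q)) = (\<Sum>v\<in>Vs mu M N. of_bool (Rel v p))"
      if "q \<in> ladder (int e * z) a p" for p q
      by (rule sum.cong[OF refl]) (simp only: Rel_h[OF that])
  qed (simp_all add: cH finite_Hs)
  also have "\<dots> = W mu M N" unfolding W_def by (rule sum.swap)
  finally show ?thesis .
qed

end


context sett begin

definition Hm :: "nat list \<Rightarrow> int \<Rightarrow> int \<Rightarrow> int \<Rightarrow> int \<Rightarrow> bool" where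
  "Hm la M N r t \<longleftrightarrow> (r + t * int e - fl t, lamz la M r - fl t) \<in> Hs la M N"

definition cnt :: "nat list \<Rightarrow> int \<Rightarrow> int \<Rightarrow> int \<Rightarrow> nat" where
  "cnt la M N t = card {r \<in> {1..N}. Hm la M N r t}"

lemma mem_Hs: "(R, C) \<in> Hs la M N \<longleftrightarrow> 1 \<le> R \<and> R \<le> N + 1 \<and> lamz la M R + 1 \<le> C \<and> C \<le> lamz la M (R - 1)"
  unfolding Hs_def by auto

lemma e_pos: "int e \<ge> 3" using e3 by simp

lemma W_rows: "W la M N = (\<Sum>r\<in>{1..N}. card {t. \<not> z dvd t \<and> Hm la M N r t})"
proof -
  have img: "Vs la M N = (\<lambda>r. (r, lamz la M r + 1)) ` {1..N}" unfolding Vs_def by auto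
  have inj: "inj_on (\<lambda>r. (r, lamz la M r + 1)) {1..N}" by (auto simp: inj_on_def)
  have row: "(\<Sum>h\<in>Hs la M N. of_bool (Rel (r, lamz la M r + 1) h)) = card {t. \<not> z dvd t \<and> Hm la M N r t}" for r
  proof -
    let ?v = "(r, lamz la M r + 1)"
    let ?f = "\<lambda>t. (r + t * int e - fl t, lamz la M r - fl t)"
    have "Hs la M N \<inter> {h. Rel ?v h} = ?f ` {t. \<not> z dvd t \<and> Hm la M N r t}"
    proof (intro set_eqI iffI)
      fix h assume "h \<in> Hs la M N \<inter> {h. Rel ?v h}"
      then obtain t where t: "\<not> z dvd t" "(fst ?v - fst h, snd ?v - snd h) = Pv t" "h \<in> Hs la M N"
        unfolding Rel_def by auto
      have "h = ?f t" using t(2) unfolding Pv_def by (auto simp: prod_eq_iff algebra_simps)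
      then show "h \<in> ?f ` {t. \<not> z dvd t \<and> Hm la M N r t}" using t unfolding Hm_def by auto
    next
      fix h assume "h \<in> ?f ` {t. \<not> z dvd t \<and> Hm la M N r t}"
      then obtain t where t: "\<not> z dvd t" "Hm la M N r t" "h = ?f t" by auto
      have "(fst ?v - fst h, snd ?v - snd h) = Pv t" using t(3) unfolding Pv_def by (auto simp: algebra_simps)
      then show "h \<in> Hs la M N \<inter> {h. Rel ?v h}" using t unfolding Rel_def Hm_def by auto
    qed
    moreover have "inj ?f"
    proof (rule injI)
      fix t t' assume "?f t = ?f t'"
      then show "t = t'" using fl_inj by auto
    qed
    ultimately show ?thesis using finite_Hs
      by (simp add: card_image inj_on_subset)
  qed
  show ?thesis unfolding W_def img sum.reindex[OF inj] using row by (simp add: o_def)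
qed

lemma t_bound:
  assumes "1 \<le> r" "r \<le> N" "\<not> z dvd t" "Hm la M N r t"
  shows "-N \<le> t \<and> t \<le> N"
proof (cases "0 \<le> t")
  case True
  have "fl t \<le> (int e - 1) * t" using fl_le[OF True] .
  moreover have "r + t * int e - fl t \<le> N + 1" using assms(4) unfolding Hm_def mem_Hs by simp
  ultimately have "r + t \<le> N + 1" by (simp add: algebra_simps)
  then show ?thesis using assms True by linarith
next
  case False
  define s where "s = -t"
  have s: "0 < s" "\<not> z dvd s" using False assms(3) s_def by auto
  have "fl t = - fl s - 1" using fl_neg[OF s(2)] s_def by simp
  moreover have "fl s \<le> (int e - 1) * s" using fl_le s by simp
  moreover have "1 \<le> r + t * int e - fl t" using assms(4) unfolding Hm_def mem_Hs by simp
  ultimately have "s \<le> r" unfolding s_def by (simp add: algebra_simps)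
  then show ?thesis using assms s_def False by linarith
qed

lemma card_filter_sum: "finite A \<Longrightarrow> card {x \<in> A. P x} = (\<Sum>x\<in>A. (of_bool (P x) :: nat))"
  by (simp add: Int_def conj_commute)

lemma W_split:
  assumes N0: "0 \<le> N"
  shows "W la M N = (\<Sum>s\<in>{1..N}. of_bool (\<not> z dvd s) * (cnt la M N s + cnt la M N (-s)))"
proof -
  let ?g = "\<lambda>t. of_bool (\<not> z dvd t) * cnt la M N t"
  have r1: "card {t. \<not> z dvd t \<and> Hm la M N r t} = (\<Sum>t\<in>{-N..N}. of_bool (\<not> z dvd t \<and> Hm la M N r t))"
    if r: "r \<in> {1..N}" for r
  proof -
    have "{t. \<not> z dvd t \<and> Hm la M N r t} = {t \<in> {-N..N}. \<not> z dvd t \<and> Hm la M N r t}"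
      using t_bound[of r N] r by auto
    then show ?thesis using card_filter_sum[of "{-N..N}"] by simp
  qed
  have "W la M N = (\<Sum>r\<in>{1..N}. \<Sum>t\<in>{-N..N}. of_bool (\<not> z dvd t \<and> Hm la M N r t))"
    unfolding W_rows using r1 by (intro sum.cong) auto
  also have "\<dots> = (\<Sum>t\<in>{-N..N}. \<Sum>r\<in>{1..N}. of_bool (\<not> z dvd t \<and> Hm la M N r t))"
    by (rule sum.swap)
  also have "\<dots> = (\<Sum>t\<in>{-N..N}. ?g t)"
  proof (rule sum.cong[OF refl])
    fix t
    show "(\<Sum>r\<in>{1..N}. of_bool (\<not> z dvd t \<and> Hm la M N r t)) = ?g t"
      unfolding cnt_def using card_filter_sum[of "{1..N}" "\<lambda>r. Hm la M N r t"]
      by (cases "z dvd t") simp_all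
  qed
  also have "{-N..N} = insert 0 ({1..N} \<union> uminus ` {1..N})" using N0 by auto
  also have "sum ?g (insert 0 ({1..N} \<union> uminus ` {1..N})) = ?g 0 + sum ?g ({1..N} \<union> uminus ` {1..N})"
    by (rule sum.insert) auto
  also have "sum ?g ({1..N} \<union> uminus ` {1..N}) = sum ?g {1..N} + sum ?g (uminus ` {1..N})"
    by (rule sum.union_disjoint) auto
  also have "sum ?g (uminus ` {1..N}) = sum (\<lambda>s. ?g (-s)) {1..N}"
    by (subst sum.reindex) (auto simp: inj_on_def)
  finally show ?thesis using z1 by (simp add: sum.distrib algebra_simps)
qed

end


lemma card_filter_insert: "finite A \<Longrightarrow> x \<notin> A \<Longrightarrow>
   card {j \<in> insert x A. P j} = card {j \<in> A. P j} + of_bool (P x)"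
proof -
  assume f: "finite A" and x: "x \<notin> A"
  have "{j \<in> insert x A. P j} = (if P x then insert x {j \<in> A. P j} else {j \<in> A. P j})" by auto
  then show ?thesis using f x by simp
qed

lemma tele:
  fixes a b :: "int \<Rightarrow> int"
  assumes am: "\<And>j. 0 \<le> j \<Longrightarrow> a (j+1) \<le> a j" and bm: "\<And>j. 0 \<le> j \<Longrightarrow> b (j+1) \<le> b j"
    and J: "0 \<le> J"
  shows "int (card {j\<in>{0..J}. a (j+1) \<le> b (j+1) \<and> b (j+1) < a j}) + of_bool (b (J+1) < a (J+1))
       = int (card {j\<in>{1..J}. b (j+1) < a j \<and> a j \<le> b j}) + of_bool (b 1 < a 0)"
  using J
proof (induction J rule: int_ge_induct)
  case base
  have "{j\<in>{0..0::int}. a (j+1) \<le> b (j+1) \<and> b (j+1) < a j} = (if a 1 \<le> b 1 \<and> b 1 < a 0 then {0} else {})"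
    by auto
  moreover have "{j\<in>{1..0::int}. b (j+1) < a j \<and> a j \<le> b j} = {}" by auto
  moreover have "a 1 \<le> a 0" using am[of 0] by simp
  ultimately show ?case by auto
next
  case (step J)
  let ?A = "\<lambda>j. a (j+1) \<le> b (j+1) \<and> b (j+1) < a j"
  let ?H = "\<lambda>j. b (j+1) < a j \<and> a j \<le> b j"
  have i1: "{0..J+1} = insert (J+1) {0..J}" using step by auto
  have i2: "{1..J+1} = insert (J+1) {1..J}" using step by auto
  have c1: "card {j\<in>{0..J+1}. ?A j} = card {j\<in>{0..J}. ?A j} + of_bool (?A (J+1))"
    unfolding i1 by (rule card_filter_insert) auto
  have c2: "card {j\<in>{1..J+1}. ?H j} = card {j\<in>{1..J}. ?H j} + of_bool (?H (J+1))"
    unfolding i2 by (rule card_filter_insert) auto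
  have m1: "a (J+1+1) \<le> a (J+1)" "b (J+1+1) \<le> b (J+1)"
    by (rule am, use step in simp) (rule bm, use step in simp)
  have "int (of_bool (?A (J+1))) + of_bool (b (J+1+1) < a (J+1+1))
        = int (of_bool (?H (J+1))) + of_bool (b (J+1) < a (J+1))"
    using m1 by (auto simp: of_bool_def)
  then show ?case using step.IH c1 c2 by simp
qed



context sett begin

lemma lamz_le_n: assumes "is_partition la" "int (part_row la 1) \<le> n" "0 < j"
  shows "lamz la M j \<le> n"
proof -
  have "part_row la (nat j) \<le> part_row la 1" using part_row_anti[OF assms(1), of 1 "nat j"] assms by auto
  then show ?thesis using assms unfolding lamz_def by auto
qed

lemma cnt_rel:
  assumes pl: "is_partition la" and nl: "int (length la) \<le> n" and nr: "int (part_row la 1) \<le> n"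
    and Nd: "N = (int e + 1) * n + 1" and Md: "M = n + int e * N + 1"
    and s1: "1 \<le> s" and sN: "s \<le> N" and sz: "\<not> z dvd s"
  shows "cnt la M N (-s) = cnt la M N s + of_bool (s * int e - 1 - fl s \<le> N - 1)"
proof -
  define m where "m = fl s"
  define l where "l = s * int e - 1 - m"
  have n0: "0 \<le> n" using nl by linarith
  have mge: "s \<le> m" unfolding m_def using fl_ge s1 by simp
  have mle: "m \<le> (int e - 1) * s" unfolding m_def using fl_le s1 by simp
  have l0: "s - 1 \<le> l" using mle unfolding l_def by (simp add: algebra_simps)
  have M1: "int (part_row la 1) \<le> M" using nr Md n0 Nd e_pos by (simp add: add_increasing2)
  have M0: "0 \<le> M" using M1 by linarith
  have lz: "lamz la M j = 0" if "n < j" for j using lamz_beyond nl that by auto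
  have ln: "lamz la M j \<le> n" if "0 < j" for j using lamz_le_n[OF pl nr that] .
  have lnn: "0 \<le> lamz la M j" for j using lamz_nonneg[OF M0] .
  have an: "lamz la M j \<le> lamz la M i" if "i \<le> j" for i j using lamz_anti[OF pl M1 that] .
  define a where "a j = lamz la M j" for j
  define b where "b j = lamz la M (j + l) + m" for j
  let ?A = "\<lambda>j. a (j+1) \<le> b (j+1) \<and> b (j+1) < a j"
  let ?H = "\<lambda>j. b (j+1) < a j \<and> a j \<le> b j"
  have fm: "fl (-s) = - m - 1" using fl_neg[OF sz] m_def by simp
  have Splus: "{r\<in>{1..N}. Hm la M N r s} = {j\<in>{1..N-l}. ?H j}"
  proof -
    have "Hm la M N r s \<longleftrightarrow> (r + l + 1, lamz la M r - m) \<in> Hs la M N" for r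
      unfolding Hm_def l_def m_def by (simp add: algebra_simps)
    also have "\<dots> r \<longleftrightarrow> 1 \<le> r + l + 1 \<and> r + l + 1 \<le> N + 1 \<and> ?H r" for r
      unfolding mem_Hs a_def b_def by (simp add: algebra_simps) linarith
    finally have h: "Hm la M N r s \<longleftrightarrow> 1 \<le> r + l + 1 \<and> r + l + 1 \<le> N + 1 \<and> ?H r" for r .
    show ?thesis
    proof (intro set_eqI)
      fix r
      have "0 \<le> l" using l0 s1 by simp
      then show "r \<in> {r\<in>{1..N}. Hm la M N r s} \<longleftrightarrow> r \<in> {j\<in>{1..N-l}. ?H j}"
        unfolding mem_Collect_eq atLeastAtMost_iff h by linarith
    qed
  qed
  have Sminus: "{r\<in>{1..N}. Hm la M N r (-s)} = (\<lambda>j. j + l + 1) ` {j\<in>{0..N-l-1}. ?A j}"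
  proof -
    have "Hm la M N r (-s) \<longleftrightarrow> (r - l, lamz la M r + m + 1) \<in> Hs la M N" for r
      unfolding Hm_def l_def fm by (simp add: algebra_simps)
    also have "\<dots> r \<longleftrightarrow> 1 \<le> r - l \<and> r - l \<le> N + 1 \<and> ?A (r - l - 1)" for r
      unfolding mem_Hs a_def b_def by (simp add: algebra_simps) linarith
    finally have h: "Hm la M N r (-s) \<longleftrightarrow> 1 \<le> r - l \<and> r - l \<le> N + 1 \<and> ?A (r - l - 1)" for r .
    show ?thesis
    proof (intro set_eqI iffI)
      fix r assume "r \<in> {r\<in>{1..N}. Hm la M N r (-s)}"
      then have "r - l - 1 \<in> {j\<in>{0..N-l-1}. ?A j}" using h[of r] by auto
      then show "r \<in> (\<lambda>j. j + l + 1) ` {j\<in>{0..N-l-1}. ?A j}" by (intro image_eqI[where x="r-l-1"]) auto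
    next
      fix r assume "r \<in> (\<lambda>j. j + l + 1) ` {j\<in>{0..N-l-1}. ?A j}"
      then obtain j where j: "r = j + l + 1" "0 \<le> j" "j \<le> N - l - 1" "?A j" by auto
      then show "r \<in> {r\<in>{1..N}. Hm la M N r (-s)}" using h[of r] l0 s1 by auto
    qed
  qed
  have cm: "cnt la M N (-s) = card {j\<in>{0..N-l-1}. ?A j}"
    unfolding cnt_def Sminus by (rule card_image) (auto simp: inj_on_def)
  have cp: "cnt la M N s = card {j\<in>{1..N-l}. ?H j}" unfolding cnt_def Splus ..
  show ?thesis
  proof (cases "l \<le> N - 1")
    case False
    then have "{j\<in>{0..N-l-1}. ?A j} = {}" "{j\<in>{1..N-l}. ?H j} = {}" by auto
    then show ?thesis using cm cp False unfolding l_def m_def by simp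
  next
    case True
    define J where "J = N - l - 1"
    have J0: "0 \<le> J" using True J_def by simp
    have am: "a (j+1) \<le> a j" for j unfolding a_def by (rule an) simp
    have bm: "b (j+1) \<le> b j" for j unfolding b_def using an[of "j + l" "j + 1 + l"] by simp
    have T: "int (card {j\<in>{0..J}. ?A j}) + of_bool (b (J+1) < a (J+1))
       = int (card {j\<in>{1..J}. ?H j}) + of_bool (b 1 < a 0)"
      by (rule tele[where a=a and b=b, OF am bm J0])
    have "0 \<le> int e * n" using n0 by simp
    then have NN: "n < N" using Nd by (simp add: algebra_simps)
    have bJ: "b (J+1) = m" unfolding b_def J_def using lz[of N] NN by simp
    have bJ2: "b (J+1+1) = m" unfolding b_def J_def using lz[of "N+1"] NN by simp
    have notH: "\<not> ?H (J+1)" using bJ bJ2 by simp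
    have notS: "\<not> (b (J+1) < a (J+1))"
    proof
      assume hyp: "b (J+1) < a (J+1)"
      then have m_lt: "m < lamz la M (N - l)" using bJ unfolding a_def J_def by simp
      show False
      proof (cases "n < N - l")
        case True then show False using m_lt lz[of "N - l"] mge s1 by simp
      next
        case False
        have "m < n" using m_lt ln[of "N - l"] True by simp
        then have "s \<le> n - 1" using mge by simp
        then have "s * (int e - 1) \<le> (n - 1) * (int e - 1)" using e_pos by (intro mult_right_mono) auto
        moreover have "N - n \<le> l" using False by simp
        ultimately show False using Nd mge n0 e_pos unfolding l_def by (simp add: algebra_simps)
      qed
    qed
    have b1: "b 1 < a 0"
    proof -
      have "(int e - 1) * s \<le> (int e - 1) * N" using sN e_pos by (intro mult_left_mono) auto
      moreover have "lamz la M (1 + l) \<le> n" using ln l0 s1 by simp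
      moreover have "a 0 = M" unfolding a_def lamz_def by simp
      ultimately show ?thesis unfolding b_def using mle Md NN n0 by (simp add: algebra_simps)
    qed
    have i2: "{1..N-l} = insert (J+1) {1..J}" using J0 J_def by auto
    have c2: "card {j\<in>{1..N-l}. ?H j} = card {j\<in>{1..J}. ?H j}"
      unfolding i2 using card_filter_insert[of "{1..J}" "J+1" ?H] notH by simp
    have "{0..N-l-1} = {0..J}" unfolding J_def ..
    then show ?thesis using T cm cp c2 notS b1 True unfolding l_def[symmetric] m_def[symmetric] by simp
  qed
qed

end


lemma col_set: assumes pl: "is_partition la" and c: "1 \<le> c"
  shows "{r. 1 \<le> r \<and> c \<le> part_row la r} = {1..part_col la c}"
proof -
  let ?S = "{r. 1 \<le> r \<and> c \<le> part_row la r}"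
  have sub: "?S \<subseteq> {1..length la}"
  proof
    fix r assume "r \<in> ?S"
    then have "1 \<le> r" "c \<le> part_row la r" by auto
    then have "\<not> length la < r" using part_row_beyond[of la r] c by auto
    then show "r \<in> {1..length la}" using \<open>1 \<le> r\<close> by auto
  qed
  have fin: "finite ?S" using sub finite_subset by blast
  have "?S = {1..card ?S}"
  proof (cases "?S = {}")
    case True then show ?thesis by (simp only: True) simp
  next
    case False
    define mx where "mx = Max ?S"
    have mx: "mx \<in> ?S" unfolding mx_def using Max_in[OF fin False] .
    have "?S = {1..mx}"
    proof (intro set_eqI iffI)
      fix r assume "r \<in> ?S"
      then show "r \<in> {1..mx}" using Max_ge[OF fin] unfolding mx_def by auto
    next
      fix r assume r: "r \<in> {1..mx}"
      have "part_row la mx \<le> part_row la r" using part_row_anti[OF pl, of r mx] r by auto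
      then show "r \<in> ?S" using mx r by auto
    qed
    then show ?thesis by simp
  qed
  then show ?thesis unfolding part_col_def by simp
qed

lemma col_iff: assumes "is_partition la" "1 \<le> c" "1 \<le> k"
  shows "c \<le> part_row la k \<longleftrightarrow> k \<le> part_col la c"
  using col_set[OF assms(1,2)] assms(3) by (metis (no_types, lifting) atLeastAtMost_iff mem_Collect_eq)

lemma col_le_len: assumes "is_partition la" "1 \<le> c" shows "part_col la c \<le> length la"
proof (rule ccontr)
  assume "\<not> part_col la c \<le> length la"
  then have "c \<le> part_row la (part_col la c)" using col_iff[OF assms, of "part_col la c"] by auto
  then show False using part_row_beyond[of la "part_col la c"] assms \<open>\<not> part_col la c \<le> length la\<close> by auto
qed

lemma hl_int: assumes "r \<le> part_col la c" "c \<le> part_row la r"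
  shows "int (hook_length la r c) = int (part_row la r) - int c + int (part_col la c) - int r + 1"
  using assms unfolding hook_length_def by (simp add: of_nat_diff)

context sett begin

lemma bad_eq:
  assumes pl: "is_partition la" and nl: "int (length la) \<le> n" and nr: "int (part_row la 1) \<le> n"
    and Nd: "N = (int e + 1) * n + 1" and Md: "M = n + int e * N + 1"
  shows "num_bad_hooks e y (nat z) la = (\<Sum>s\<in>{1..N}. of_bool (\<not> z dvd s) * cnt la M N s)"
proof -
  have n0: "0 \<le> n" using nl by linarith
  have "0 \<le> int e * n" using n0 by simp
  then have NN: "n < N" using Nd by (simp add: algebra_simps)
  have M0: "0 \<le> M" using Md NN n0 e_pos by simp
  let ?B = "{(r, c). 1 \<le> r \<and> 1 \<le> c \<and> c \<le> part_row la r \<and>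
       bad_hook e y (nat z) (hook_length la r c) (arm_length la r c)}"
  let ?I = "SIGMA s:{s\<in>{1..N}. \<not> z dvd s}. {r \<in> {1..N}. Hm la M N r s}"
  let ?phi = "\<lambda>(s::int, r::int). (nat r, nat (lamz la M r - fl s))"
  have dz: "nat z dvd t \<longleftrightarrow> z dvd int t" for t using z1 by (simp add: nat_dvd_iff)
  have Hm_iff: "Hm la M N r s \<longleftrightarrow> 1 \<le> r + (s * int e - fl s) \<and> r + (s * int e - fl s) \<le> N + 1 \<and>
      lamz la M (r + (s * int e - fl s)) + 1 \<le> lamz la M r - fl s \<and>
      lamz la M r - fl s \<le> lamz la M (r + (s * int e - fl s) - 1)" for r s
    unfolding Hm_def mem_Hs by (simp add: algebra_simps)
  have fwd: "?phi (s, r) \<in> ?B \<and> 1 \<le> lamz la M r - fl s" if sr: "(s, r) \<in> ?I" for s r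
  proof -
    from sr have s1: "1 \<le> s" "s \<le> N" "\<not> z dvd s" and r1: "1 \<le> r" "r \<le> N" and H: "Hm la M N r s" by auto
    define m where "m = fl s"
    define K where "K = r + (s * int e - m) - 1"
    have mge: "s \<le> m" unfolding m_def using fl_ge s1 by simp
    have mle: "m \<le> (int e - 1) * s" unfolding m_def using fl_le s1 by simp
    have Kr: "r \<le> K" using mle s1 unfolding K_def by (simp add: algebra_simps)
    from H[unfolded Hm_iff] have h1: "lamz la M (K + 1) + 1 \<le> lamz la M r - m"
      and h2: "lamz la M r - m \<le> lamz la M K"
      unfolding K_def m_def by (simp_all add: algebra_simps)
    define c where "c = lamz la M r - m"
    have c1: "1 \<le> c" using h1 lamz_nonneg[OF M0, of la "K+1"] unfolding c_def by simp
    have lr: "lamz la M r = int (part_row la (nat r))" using r1 unfolding lamz_def by simp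
    have lK: "lamz la M K = int (part_row la (nat K))" using r1 Kr unfolding lamz_def by simp
    have lK1: "lamz la M (K+1) = int (part_row la (nat K + 1))" using r1 Kr unfolding lamz_def
      by (simp add: nat_add_distrib)
    have cn: "int (nat c) = c" using c1 by simp
    have cle: "nat c \<le> part_row la (nat r)" using lr c_def mge s1 by simp
    have colK: "part_col la (nat c) = nat K"
    proof -
      have "nat c \<le> part_row la (nat K)" using h2 lK c_def by simp
      then have "nat K \<le> part_col la (nat c)" using col_iff[OF pl, of "nat c" "nat K"] c1 Kr r1 by simp
      moreover have "\<not> nat c \<le> part_row la (nat K + 1)" using h1 lK1 c_def by simp
      then have "\<not> nat K + 1 \<le> part_col la (nat c)" using col_iff[OF pl, of "nat c" "nat K + 1"] c1 by simp
      ultimately show ?thesis by simp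
    qed
    have rK: "nat r \<le> part_col la (nat c)" using colK Kr by simp
    have hl: "int (hook_length la (nat r) (nat c)) = s * int e"
      using hl_int[OF rK cle] colK cn lr r1 Kr unfolding c_def K_def by simp
    have al: "int (arm_length la (nat r) (nat c)) = m"
      unfolding arm_length_def using cle lr cn unfolding c_def by (simp add: of_nat_diff)
    have "bad_hook e y (nat z) (hook_length la (nat r) (nat c)) (arm_length la (nat r) (nat c))"
      unfolding bad_hook_def
    proof (intro exI[of _ "nat s"] conjI)
      show "0 < nat s" using s1 by simp
      show "\<not> nat z dvd nat s" using s1 dz by simp
      have "int (hook_length la (nat r) (nat c)) = int (nat s * e)" using hl s1 by simp
      then show "hook_length la (nat r) (nat c) = nat s * e" by (simp only: of_nat_eq_iff)
      show "int (arm_length la (nat r) (nat c)) = \<lfloor>y * of_nat (nat s)\<rfloor>" using al s1 unfolding m_def fl_def by simp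
    qed
    then show ?thesis using r1 c1 cle unfolding c_def m_def by (auto simp: Suc_le_eq)
  qed
  have inj: "inj_on ?phi ?I"
  proof (rule inj_onI)
    fix x x' assume x: "x \<in> ?I" and x': "x' \<in> ?I" and eq: "?phi x = ?phi x'"
    obtain s r where sr: "x = (s, r)" by force
    obtain s' r' where sr': "x' = (s', r')" by force
    have p1: "1 \<le> lamz la M r - fl s" using fwd[of s r] x sr by simp
    have p2: "1 \<le> lamz la M r' - fl s'" using fwd[of s' r'] x' sr' by simp
    have rr: "r = r'" using eq x x' sr sr' by auto
    then have "fl s = fl s'" using eq p1 p2 sr sr' by simp
    then show "x = x'" using fl_inj rr sr sr' by simp
  qed
  have img: "?phi ` ?I = ?B"
  proof (intro set_eqI iffI)
    fix x assume "x \<in> ?phi ` ?I"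
    then show "x \<in> ?B" using fwd by auto
  next
    fix x assume xB: "x \<in> ?B"
    obtain r c where x: "x = (r, c)" by force
    from xB x have r1: "1 \<le> r" and c1: "1 \<le> c" and cr: "c \<le> part_row la r"
      and bh: "bad_hook e y (nat z) (hook_length la r c) (arm_length la r c)" by auto
    from bh obtain t where t: "0 < t" "\<not> nat z dvd t" "hook_length la r c = t * e"
      "int (arm_length la r c) = \<lfloor>y * of_nat t\<rfloor>" unfolding bad_hook_def by auto
    define s where "s = int t"
    define m where "m = fl s"
    have am: "int (part_row la r) - int c = m" using t(4) cr unfolding m_def s_def fl_def arm_length_def
      by (simp add: of_nat_diff)
    have rK: "r \<le> part_col la c" using col_iff[OF pl c1 r1] cr by simp
    define K where "K = part_col la c"
    have hl: "int (hook_length la r c) = m + int K - int r + 1" using hl_int[OF rK cr] am unfolding K_def by simp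
    have KS: "int K = int r + (s * int e - m) - 1" using hl t(3) unfolding s_def by simp
    have Klen: "K \<le> length la" using col_le_len[OF pl c1] unfolding K_def .
    have s1: "1 \<le> s" using t(1) s_def by simp
    have mle: "m \<le> (int e - 1) * s" unfolding m_def using fl_le s1 by simp
    have sN: "s \<le> N" using KS Klen nl NN mle r1 by (simp add: algebra_simps)
    have sz: "\<not> z dvd s" using t(2) dz s_def by simp
    have rN: "int r \<le> N" using rK Klen nl NN unfolding K_def by linarith
    have Kr: "r \<le> K" using rK K_def by simp
    have hK: "c \<le> part_row la K" using col_iff[OF pl c1, of K] Kr r1 unfolding K_def by simp
    have hK1: "\<not> c \<le> part_row la (K + 1)" using col_iff[OF pl c1, of "K+1"] unfolding K_def by simp
    have lr: "lamz la M (int r) = int (part_row la r)" using r1 unfolding lamz_def by simp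
    have lK: "lamz la M (int K) = int (part_row la K)" using r1 Kr unfolding lamz_def by simp
    have lK1: "lamz la M (int K + 1) = int (part_row la (K + 1))" unfolding lamz_def by (simp add: nat_add_distrib)
    have H: "Hm la M N (int r) s"
    proof -
      have eq: "int r + (s * int e - m) = int K + 1" using KS by simp
      show ?thesis unfolding Hm_iff m_def[symmetric] eq
        using lr lK lK1 hK hK1 am Klen nl NN by simp
    qed
    have "(s, int r) \<in> ?I" using s1 sN sz r1 rN H by simp
    moreover have "?phi (s, int r) = x" using x am lr unfolding m_def by simp
    ultimately show "x \<in> ?phi ` ?I" by force
  qed
  have "num_bad_hooks e y (nat z) la = card ?I"
    unfolding num_bad_hooks_def img[symmetric] by (rule card_image[OF inj])
  also have "\<dots> = (\<Sum>s\<in>{s\<in>{1..N}. \<not> z dvd s}. cnt la M N s)" unfolding cnt_def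
    by (subst card_SigmaI) (auto intro: finite_subset[of _ "{1..N}"])
  also have "\<dots> = (\<Sum>s\<in>{1..N}. of_bool (\<not> z dvd s) * cnt la M N s)"
    by (simp add: Int_def conj_commute)
  finally show ?thesis .
qed

end


context sett begin

lemma W_formula:
  assumes pl: "is_partition la" and nl: "int (length la) \<le> n" and nr: "int (part_row la 1) \<le> n"
    and Nd: "N = (int e + 1) * n + 1" and Md: "M = n + int e * N + 1"
  shows "W la M N = 2 * (\<Sum>s\<in>{1..N}. of_bool (\<not> z dvd s) * cnt la M N s)
           + (\<Sum>s\<in>{1..N}. of_bool (\<not> z dvd s) * of_bool (s * int e - 1 - fl s \<le> N - 1))"
proof -
  have n0: "0 \<le> n" using nl by linarith
  have "0 \<le> int e * n" using n0 by simp
  then have N0: "0 \<le> N" using Nd n0 by (simp add: algebra_simps)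
  have "W la M N = (\<Sum>s\<in>{1..N}. of_bool (\<not> z dvd s) * (cnt la M N s + cnt la M N (-s)))"
    by (rule W_split[OF N0])
  also have "\<dots> = (\<Sum>s\<in>{1..N}. 2 * (of_bool (\<not> z dvd s) * cnt la M N s)
           + of_bool (\<not> z dvd s) * of_bool (s * int e - 1 - fl s \<le> N - 1))"
  proof (rule sum.cong[OF refl])
    fix s assume s: "s \<in> {1..N}"
    show "of_bool (\<not> z dvd s) * (cnt la M N s + cnt la M N (-s)) =
          2 * (of_bool (\<not> z dvd s) * cnt la M N s) + of_bool (\<not> z dvd s) * of_bool (s * int e - 1 - fl s \<le> N - 1)"
    proof (cases "z dvd s")
      case False
      then show ?thesis using cnt_rel[OF pl nl nr Nd Md, of s] s by simp
    qed simp
  qed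
  also have "\<dots> = 2 * (\<Sum>s\<in>{1..N}. of_bool (\<not> z dvd s) * cnt la M N s)
           + (\<Sum>s\<in>{1..N}. of_bool (\<not> z dvd s) * of_bool (s * int e - 1 - fl s \<le> N - 1))"
    by (simp only: sum.distrib sum_distrib_left)
  finally show ?thesis .
qed

end

theorem mainTheorem2:
  fixes e :: nat and y :: rat and a z :: int and la mu :: "nat list"
  assumes "e \<ge> 3"
    and "1 \<le> y" and "y \<le> of_nat e - 1"
    and "quotient_of y = (a, z)"
    and "z > 1"
    and "is_partition la" and "is_partition mu"
    and "ladder_equiv (int e * z) (a) la mu"
  shows "num_bad_hooks e y (nat z) la = num_bad_hooks e y (nat z) mu"
proof -
  interpret sett e y a z using assms(1-5) by unfold_locales
  define n where "n = int (sum_list la + sum_list mu)"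
  define N where "N = (int e + 1) * n + 1"
  define M where "M = n + int e * N + 1"
  have pl: "is_partition la" and pm: "is_partition mu" using assms by auto
  have nl: "int (length la) \<le> n" using length_le_sum[of la] pl unfolding n_def is_partition_def by simp
  have nm: "int (length mu) \<le> n" using length_le_sum[of mu] pm unfolding n_def is_partition_def by simp
  have rl: "int (part_row la 1) \<le> n" using part_row_le_sum[of la 1] unfolding n_def by simp
  have rm: "int (part_row mu 1) \<le> n" using part_row_le_sum[of mu 1] unfolding n_def by simp
  have n0: "0 \<le> n" unfolding n_def by simp
  have "0 \<le> int e * n" using n0 by simp
  then have NN: "n < N" using N_def by (simp add: algebra_simps)
  have "0 \<le> int e * N" using NN n0 by simp
  then have MM: "n \<le> M" using M_def by simp
  have "W la M N = W mu M N"
    by (rule W_inv[OF assms(8) pl pm]) (use rl rm nl nm NN MM in linarith)+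
  then have "num_bad_hooks e y (nat z) la = num_bad_hooks e y (nat z) mu"
    using W_formula[OF pl nl rl N_def M_def] W_formula[OF pm nm rm N_def M_def]
      bad_eq[OF pl nl rl N_def M_def] bad_eq[OF pm nm rm N_def M_def]
    by simp
  then show ?thesis .
qed


end
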